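(* Let $D\ge1$, $\beta>0$, $c:\{0,\ldots,D\}\to\mathbb{R}$. If $T_N$ is a random plane tree distributed according to $P_N$ on $\mathbb{T}_N(D)$, then $\left(\frac{\chi_0(T_N)}{N},\frac{\chi_1(T_N)}{N},\ldots,\frac{\chi_D(T_N)}{N}\right)\to p^*$ in probability as $N\to\infty$.
   Context: A plane (ordered) tree is a rooted tree in which the children of each vertex are linearly ordered. $\mathbb{T}_N(D)$ is the set of plane trees on $N$ vertices in which every vertex has at most $D$ children; $\chi_k(T)$ is the number of vertices of $T$ with exactly $k$ children. $H(T)=\sum_{k=0}^D c(k)\chi_k(T)$, $P_N\{T\}=e^{-\beta H(T)}/\sum_{T'\in\mathbb{T}_N(D)}e^{-\beta H(T')}$. $\mathcal{M}=\{p\in[0,1]^{D+1}:\ \sum_{k=0}^D p_k=1,\ \sum_{k=0}^D kp_k=1\}$, $J(p)=\sum_{k=0}^D p_k\ln p_k+\beta\sum_{k=0}^D p_kc(k)$ (with $0\ln0=0$), and $p^*$ is the unique minimizer of $J$ on $\mathcal{M}$. *)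

theory Defs
  imports Complex_Main
begin

datatype ptree = Node "ptree list"

fun nverts :: "ptree \<Rightarrow> nat" where
  "nverts (Node ts) = 1 + sum_list (map nverts ts)"

fun chi :: "nat \<Rightarrow> ptree \<Rightarrow> nat" where
  "chi k (Node ts) = (if length ts = k then 1 else 0) + sum_list (map (chi k) ts)"

fun deg_le :: "nat \<Rightarrow> ptree \<Rightarrow> bool" where
  "deg_le D (Node ts) = (length ts \<le> D \<and> list_all (deg_le D) ts)"

definition trees :: "nat \<Rightarrow> nat \<Rightarrow> ptree set" where
  "trees N D = {T. nverts T = N \<and> deg_le D T}"

definition energy :: "(nat \<Rightarrow> real) \<Rightarrow> nat \<Rightarrow> ptree \<Rightarrow> real" where
  "energy c D T = (\<Sum>k\<le>D. c k * real (chi k T))"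

definition gibbs_prob :: "real \<Rightarrow> (nat \<Rightarrow> real) \<Rightarrow> nat \<Rightarrow> nat \<Rightarrow> ptree set \<Rightarrow> real" where
  "gibbs_prob \<beta> c D N A =
     (\<Sum>T\<in>trees N D \<inter> A. exp (- \<beta> * energy c D T)) /
     (\<Sum>T\<in>trees N D. exp (- \<beta> * energy c D T))"

text \<open>The set M (vectors indexed by 0..D; values at other indices are irrelevant).\<close>
definition Mset :: "nat \<Rightarrow> (nat \<Rightarrow> real) set" where
  "Mset D = {p. (\<forall>k\<le>D. 0 \<le> p k \<and> p k \<le> 1) \<and> (\<Sum>k\<le>D. p k) = 1
                 \<and> (\<Sum>k\<le>D. real k * p k) = 1}"

definition Jfun :: "real \<Rightarrow> (nat \<Rightarrow> real) \<Rightarrow> nat \<Rightarrow> (nat \<Rightarrow> real) \<Rightarrow> real" where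
  "Jfun \<beta> c D p = (\<Sum>k\<le>D. (if p k = 0 then 0 else p k * ln (p k))) + \<beta> * (\<Sum>k\<le>D. p k * c k)"

end

theory Submission
  imports Defs
begin
fun enc :: "ptree \<Rightarrow> nat list" where
  "enc (Node ts) = length ts # concat (map enc ts)"

definition cnt :: "nat \<Rightarrow> nat list \<Rightarrow> nat" where
  "cnt k w = length (filter ((=) k) w)"

lemma cnt_simps[simp]: "cnt k [] = 0" "cnt k (x # w) = (if k = x then 1 else 0) + cnt k w"
  "cnt k (u @ v) = cnt k u + cnt k v"
  by (auto simp: cnt_def)

lemma cnt_concat: "cnt k (concat ws) = sum_list (map (cnt k) ws)"
  by (induction ws) auto

lemma chi_enc: "chi k T = cnt k (enc T)"
proof (induction T)
  case (Node ts)
  then show ?case by (simp add: cnt_concat o_def cong: map_cong)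
qed

lemma length_enc: "length (enc T) = nverts T"
proof (induction T)
  case (Node ts)
  then show ?case by (simp add: length_concat o_def cong: map_cong)
qed

lemma nverts_pos: "nverts T \<ge> 1"
  by (cases T) auto

lemma sum_list_plus1: "sum_list (map (\<lambda>t. f t + 1) ts) = sum_list (map f ts) + length (ts::'a list)"
  by (induction ts) auto

lemma sum_list_concat': "sum_list (concat ws) = sum_list (map sum_list (ws :: nat list list))"
  by (induction ws) auto

lemma sum_enc: "sum_list (enc T) + 1 = nverts T"
proof (induction T)
  case (Node ts)
  then have e: "map nverts ts = map (\<lambda>t. sum_list (enc t) + 1) ts" by auto
  have "sum_list (map nverts ts) = sum_list (map (\<lambda>t. sum_list (enc t)) ts) + length ts"
    unfolding e sum_list_plus1 ..
  then show ?case by (simp add: sum_list_concat' o_def)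
qed

lemma deg_enc: "deg_le D T \<longleftrightarrow> set (enc T) \<subseteq> {..D}"
proof (induction T)
  case (Node ts)
  then show ?case by (auto simp: list_all_iff)
qed

lemma enc_inj_aux:
  "\<forall>ts ts' r r'. length (concat (map enc ts)) = n \<longrightarrow> length ts = length ts' \<longrightarrow>
     concat (map enc ts) @ r = concat (map enc ts') @ r' \<longrightarrow> ts = ts' \<and> r = r'"
proof (induction n rule: less_induct)
  case (less n)
  show ?case
  proof (intro allI impI)
    fix ts ts' :: "ptree list" and r r' :: "nat list"
    assume n: "length (concat (map enc ts)) = n" and l: "length ts = length ts'"
      and e: "concat (map enc ts) @ r = concat (map enc ts') @ r'"
    show "ts = ts' \<and> r = r'"
    proof (cases ts)
      case Nil
      then show ?thesis using l e by auto
    next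
      case (Cons t ts1)
      then obtain t' ts1' where ts': "ts' = t' # ts1'" using l by (cases ts') auto
      obtain cs where t: "t = Node cs" by (cases t)
      obtain cs' where t': "t' = Node cs'" by (cases t')
      from e have lc: "length cs = length cs'" and
        e2: "concat (map enc (cs @ ts1)) @ r = concat (map enc (cs' @ ts1')) @ r'"
        by (auto simp: Cons ts' t t')
      have lt: "length (concat (map enc (cs @ ts1))) < n" using n by (simp add: Cons t)
      have "cs @ ts1 = cs' @ ts1' \<and> r = r'"
        using less[OF lt, rule_format, OF refl, of "cs' @ ts1'" r r'] e2 lc l Cons ts' by auto
      then show ?thesis using lc by (auto simp: Cons ts' t t')
    qed
  qed
qed

lemma enc_inj: "inj enc"
proof (rule injI)
  fix x y assume "enc x = enc y"
  then have "concat (map enc [x]) @ [] = concat (map enc [y]) @ []" by simp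
  then show "x = y" using enc_inj_aux[of "length (enc x)", rule_format, of "[x]" "[y]" "[]" "[]"] by simp
qed

definition F :: "nat \<Rightarrow> nat list \<Rightarrow> bool" where
  "F m w \<longleftrightarrow> length w = sum_list w + m \<and> (\<forall>j<length w. j < sum_list (take j w) + m)"

lemma F_dec: "F m w \<Longrightarrow> set w \<subseteq> {..D} \<Longrightarrow>
   \<exists>ts. length ts = m \<and> concat (map enc ts) = w \<and> list_all (deg_le D) ts"
proof (induction w arbitrary: m)
  case Nil
  then show ?case by (auto simp: F_def)
next
  case (Cons k r)
  have m: "m \<ge> 1" using Cons.prems(1) unfolding F_def by force
  have "F (m - 1 + k) r"
    unfolding F_def
  proof (intro conjI allI impI)
    show "length r = sum_list r + (m - 1 + k)" using Cons.prems(1) m by (auto simp: F_def)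
    fix j assume "j < length r"
    then have "Suc j < length (k # r)" by simp
    then have "Suc j < sum_list (take (Suc j) (k # r)) + m" using Cons.prems(1) F_def by blast
    then show "j < sum_list (take j r) + (m - 1 + k)" using m by simp
  qed
  then obtain ts where ts: "length ts = m - 1 + k" "concat (map enc ts) = r" "list_all (deg_le D) ts"
    using Cons.IH Cons.prems(2) by auto
  let ?t = "Node (take k ts)"
  have "length (?t # drop k ts) = m" using ts m by simp
  moreover have "concat (map enc (?t # drop k ts)) = k # r"
    using ts(1,2) m by (simp flip: map_append concat_append)
  moreover have "list_all (deg_le D) (?t # drop k ts)"
    using ts Cons.prems(2) by (auto simp: list_all_iff dest: in_set_takeD in_set_dropD)
  ultimately show ?case by blast
qed

definition W :: "nat \<Rightarrow> nat \<Rightarrow> nat list set" where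
  "W D N = {w. set w \<subseteq> {..D} \<and> length w = N}"

definition pw :: "(nat \<Rightarrow> real) \<Rightarrow> nat list \<Rightarrow> real" where
  "pw q w = prod_list (map q w)"

lemma finite_W[simp]: "finite (W D N)"
  unfolding W_def by (rule finite_lists_length_eq) simp

lemma W_0: "W D 0 = {[]}" by (auto simp: W_def)

lemma W_Suc: "W D (Suc N) = (\<lambda>(x,w). x#w) ` ({..D} \<times> W D N)"
proof
  show "W D (Suc N) \<subseteq> (\<lambda>(x,w). x#w) ` ({..D} \<times> W D N)"
  proof
    fix v assume "v \<in> W D (Suc N)"
    then obtain x w where "v = x # w" "x \<le> D" "w \<in> W D N"
      by (cases v) (auto simp: W_def)
    then show "v \<in> (\<lambda>(x,w). x#w) ` ({..D} \<times> W D N)" by force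
  qed
qed (auto simp: W_def)

lemma sum_W_Suc: "(\<Sum>w\<in>W D (Suc N). f w) = (\<Sum>x\<le>D. \<Sum>w\<in>W D N. f (x#w))"
proof -
  have "inj_on (\<lambda>(x,w). x#w) ({..D} \<times> W D N)" by (auto simp: inj_on_def)
  then have "(\<Sum>w\<in>W D (Suc N). f w) = (\<Sum>(x,w)\<in>{..D} \<times> W D N. f (x#w))"
    unfolding W_Suc by (subst sum.reindex) (auto simp: case_prod_beta)
  also have "\<dots> = (\<Sum>x\<le>D. \<Sum>w\<in>W D N. f (x#w))"
    by (rule sum.cartesian_product[symmetric])
  finally show ?thesis .
qed

lemma sum_prod_W: "(\<Sum>w\<in>W D N. prod_list (map (g::nat\<Rightarrow>real) w)) = (\<Sum>k\<le>D. g k) ^ N"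
proof (induction N)
  case 0 then show ?case by (simp add: W_0)
next
  case (Suc N)
  have "(\<Sum>w\<in>W D (Suc N). prod_list (map g w)) = (\<Sum>x\<le>D. g x * (\<Sum>w\<in>W D N. prod_list (map g w)))"
    unfolding sum_W_Suc by (rule sum.cong) (simp_all add: sum_distrib_left)
  also have "\<dots> = (\<Sum>k\<le>D. g k) ^ Suc N" using Suc by (simp add: sum_distrib_right)
  finally show ?case .
qed

locale distr =
  fixes D :: nat and q :: "nat \<Rightarrow> real"
  assumes q_nonneg: "\<And>k. k \<le> D \<Longrightarrow> q k \<ge> 0"
    and q_sum: "(\<Sum>k\<le>D. q k) = 1"
    and q_mean: "(\<Sum>k\<le>D. real k * q k) = 1"
begin

lemma pw_nonneg: "set w \<subseteq> {..D} \<Longrightarrow> pw q w \<ge> 0"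
  unfolding pw_def by (induction w) (auto intro!: mult_nonneg_nonneg q_nonneg)

lemma M0: "(\<Sum>w\<in>W D N. pw q w) = 1"
  unfolding pw_def sum_prod_W q_sum by simp

lemma M1: "(\<Sum>w\<in>W D N. pw q w * (real (sum_list w) - N)) = 0"
proof (induction N)
  case 0 then show ?case by (simp add: W_0)
next
  case (Suc N)
  have "(\<Sum>w\<in>W D (Suc N). pw q w * (real (sum_list w) - Suc N))
     = (\<Sum>x\<le>D. q x * (\<Sum>w\<in>W D N. pw q w * (real (sum_list w) - N)) + q x * (real x - 1) * (\<Sum>w\<in>W D N. pw q w))"
    by (simp add: sum_W_Suc pw_def sum_distrib_left sum.distrib[symmetric] algebra_simps)
  also have "\<dots> = (\<Sum>x\<le>D. q x * (real x - 1))" using Suc M0 by simp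
  also have "\<dots> = 0" using q_sum q_mean by (simp add: algebra_simps sum_subtractf)
  finally show ?case .
qed

definition "var = (\<Sum>k\<le>D. q k * (real k - 1)^2)"

lemma M2: "(\<Sum>w\<in>W D N. pw q w * (real (sum_list w) - N)^2) = N * var"
proof (induction N)
  case 0 then show ?case by (simp add: W_0)
next
  case (Suc N)
  have e: "pw q (x#w) * (real (sum_list (x#w)) - Suc N)^2 =
     q x * (pw q w * (real (sum_list w) - N)^2)
         + 2 * q x * (real x - 1) * (pw q w * (real (sum_list w) - N))
         + q x * (real x - 1)^2 * pw q w" for x w
    by (simp add: pw_def algebra_simps power2_eq_square)
  have "(\<Sum>w\<in>W D (Suc N). pw q w * (real (sum_list w) - Suc N)^2)
     = (\<Sum>x\<le>D. q x * (\<Sum>w\<in>W D N. pw q w * (real (sum_list w) - N)^2)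
         + 2 * q x * (real x - 1) * (\<Sum>w\<in>W D N. pw q w * (real (sum_list w) - N))
         + q x * (real x - 1)^2 * (\<Sum>w\<in>W D N. pw q w))"
    unfolding sum_W_Suc e by (simp add: sum.distrib sum_distrib_left)
  also have "\<dots> = (\<Sum>x\<le>D. q x * (N * var) + q x * (real x - 1)^2)" using Suc M0 M1 by simp
  also have "\<dots> = (\<Sum>x\<le>D. q x) * (N * var) + (\<Sum>x\<le>D. q x * (real x - 1)^2)"
    by (simp add: sum.distrib sum_distrib_right)
  also have "\<dots> = Suc N * var" using q_sum unfolding var_def[symmetric] by (simp add: algebra_simps)
  finally show ?case .
qed

lemma chern_eq: fixes s :: real assumes "k \<le> D"
  shows "(\<Sum>w\<in>W D N. pw q w * exp (s * cnt k w)) = (1 + q k * (exp s - 1)) ^ N"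
proof -
  have "\<And>w. pw q w * exp (s * cnt k w) = prod_list (map (\<lambda>j. q j * exp (s * (if k = j then 1 else 0))) w)"
  proof -
    fix w show "pw q w * exp (s * cnt k w) = prod_list (map (\<lambda>j. q j * exp (s * (if k = j then 1 else 0))) w)"
      by (induction w) (auto simp: pw_def distrib_left exp_add)
  qed
  then have "(\<Sum>w\<in>W D N. pw q w * exp (s * cnt k w)) = (\<Sum>j\<le>D. q j * exp (s * (if k = j then 1 else 0)))^N"
    by (simp add: sum_prod_W)
  also have "(\<Sum>j\<le>D. q j * exp (s * (if k = j then 1 else 0))) = (\<Sum>j\<le>D. q j + (if j = k then q k * (exp s - 1) else 0))"
    by (rule sum.cong) (auto simp: algebra_simps)
  also have "\<dots> = 1 + q k * (exp s - 1)" using assms by (simp add: sum.distrib q_sum)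
  finally show ?thesis .
qed

lemma chern_le: fixes s :: real assumes "k \<le> D"
  shows "(\<Sum>w\<in>W D N. pw q w * exp (s * cnt k w)) \<le> exp (N * (q k * (exp s - 1)))"
proof -
  have "1 + q k * (exp s - 1) \<le> exp (q k * (exp s - 1))" by simp
  moreover have "0 \<le> 1 + q k * (exp s - 1)"
  proof -
    have "q k \<le> sum q {..D}" by (rule member_le_sum) (auto intro: q_nonneg simp: assms)
    then have "q k \<le> 1" using q_sum by simp
    moreover have "q k * (1 - exp s) \<le> q k * 1" using q_nonneg[OF assms]
      by (intro mult_left_mono) auto
    ultimately have "q k * (1 - exp s) \<le> 1" by simp
    then show ?thesis by (simp add: algebra_simps)
  qed
  ultimately have "(1 + q k * (exp s - 1)) ^ N \<le> exp (q k * (exp s - 1)) ^ N"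
    by (rule power_mono)
  then show ?thesis using chern_eq[OF assms] by (simp add: exp_of_nat_mult[symmetric])
qed

end

lemma exp_minus_bound: fixes t :: real assumes "0 \<le> t" shows "exp (-t) - 1 \<le> -t + t^2"
proof -
  have "exp t \<ge> 1 + t" by simp
  then have "exp (-t) \<le> 1 / (1 + t)" using assms by (simp add: exp_minus field_simps)
  also have "\<dots> \<le> 1 - t + t^2" using assms by (simp add: field_simps power2_eq_square)
  finally show ?thesis by simp
qed

lemma sum_Un_le_nonneg: fixes f :: "'a \<Rightarrow> real"
  assumes "finite A" "finite B" "\<And>x. x \<in> A \<union> B \<Longrightarrow> f x \<ge> 0"
  shows "sum f (A \<union> B) \<le> sum f A + sum f B"
proof -
  have "sum f (A \<inter> B) \<ge> 0" using assms by (intro sum_nonneg) auto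
  then show ?thesis using sum_Un[OF assms(1,2), of f] by simp
qed

lemma sum_UN_le_nonneg: fixes f :: "'a \<Rightarrow> real"
  assumes "finite I" "\<And>i. i \<in> I \<Longrightarrow> finite (A i)" "\<And>x. x \<in> (\<Union>i\<in>I. A i) \<Longrightarrow> f x \<ge> 0"
  shows "sum f (\<Union>i\<in>I. A i) \<le> (\<Sum>i\<in>I. sum f (A i))"
  using assms
proof (induction I rule: finite_induct)
  case empty then show ?case by simp
next
  case (insert i I)
  have "sum f (\<Union>i\<in>insert i I. A i) = sum f (A i \<union> (\<Union>i\<in>I. A i))" by simp
  also have "\<dots> \<le> sum f (A i) + sum f (\<Union>i\<in>I. A i)"
    using insert by (intro sum_Un_le_nonneg) auto
  also have "\<dots> \<le> sum f (A i) + (\<Sum>i\<in>I. sum f (A i))"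
    using insert by (intro add_left_mono insert.IH) auto
  finally show ?case using insert by simp
qed

context distr begin

lemma q_le1: "k \<le> D \<Longrightarrow> q k \<le> 1"
proof -
  assume k: "k \<le> D"
  have "q k \<le> sum q {..D}" by (rule member_le_sum) (auto intro: q_nonneg simp: k)
  then show ?thesis using q_sum by simp
qed

lemma W_set: "w \<in> W D N \<Longrightarrow> set w \<subseteq> {..D}" by (simp add: W_def)

lemma tail_gen:
  fixes s a :: real
  assumes k: "k \<le> D" and A: "A \<subseteq> W D N" and hyp: "\<And>w. w \<in> A \<Longrightarrow> s * cnt k w \<ge> a"
  shows "(\<Sum>w\<in>A. pw q w) \<le> exp (N * (q k * (exp s - 1)) - a)"
proof -
  have "(\<Sum>w\<in>A. pw q w) \<le> (\<Sum>w\<in>A. pw q w * exp (s * cnt k w - a))"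
  proof (rule sum_mono)
    fix w assume w: "w \<in> A"
    have e1: "1 \<le> exp (s * cnt k w - a)" using hyp[OF w] by simp
    have "set w \<subseteq> {..D}" using w A W_set by auto
    from mult_left_mono[OF e1 pw_nonneg[OF this]]
    show "pw q w \<le> pw q w * exp (s * cnt k w - a)" by simp
  qed
  also have "\<dots> \<le> (\<Sum>w\<in>W D N. pw q w * exp (s * cnt k w - a))"
    using A by (intro sum_mono2) (auto intro!: mult_nonneg_nonneg pw_nonneg W_set)
  also have "\<dots> = exp (-a) * (\<Sum>w\<in>W D N. pw q w * exp (s * cnt k w))"
    by (simp add: sum_distrib_left exp_diff exp_minus field_simps)
  also have "\<dots> \<le> exp (-a) * exp (N * (q k * (exp s - 1)))"
    using chern_le[OF k] by (intro mult_left_mono) auto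
  also have "\<dots> = exp (N * (q k * (exp s - 1)) - a)" unfolding exp_add[symmetric] by simp
  finally show ?thesis .
qed

lemma upper_tail:
  assumes k: "k \<le> D" and t: "0 \<le> t" "t \<le> 1" "2 * t \<le> \<epsilon>"
  shows "(\<Sum>w\<in>{w\<in>W D N. real (cnt k w) \<ge> N * (q k + \<epsilon>)}. pw q w) \<le> exp (- (N * t^2))"
proof -
  have "(\<Sum>w\<in>{w\<in>W D N. real (cnt k w) \<ge> N * (q k + \<epsilon>)}. pw q w)
     \<le> exp (N * (q k * (exp t - 1)) - t * (N * (q k + \<epsilon>)))"
    by (rule tail_gen[OF k]) (auto intro: mult_left_mono t)
  also have "\<dots> \<le> exp (- (N * t^2))"
  proof -
    have "exp t - 1 \<le> t + t^2" using exp_bound[OF t(1,2)] by simp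
    then have "q k * (exp t - 1) \<le> q k * (t + t^2)" using q_nonneg[OF k] by (rule mult_left_mono)
    moreover have "q k * t^2 \<le> 1 * t^2" using q_le1[OF k] by (intro mult_right_mono) auto
    ultimately have "q k * (exp t - 1) - t * (q k + \<epsilon>) \<le> -(t^2)"
      using t mult_left_mono[OF t(3), of t] by (simp add: algebra_simps power2_eq_square)
    then have "real N * (q k * (exp t - 1) - t * (q k + \<epsilon>)) \<le> real N * (-(t^2))"
      by (intro mult_left_mono) auto
    then show ?thesis by (simp add: algebra_simps)
  qed
  finally show ?thesis .
qed

lemma lower_tail:
  assumes k: "k \<le> D" and t: "0 \<le> t" "t \<le> 1" "2 * t \<le> \<epsilon>"
  shows "(\<Sum>w\<in>{w\<in>W D N. real (cnt k w) \<le> N * (q k - \<epsilon>)}. pw q w) \<le> exp (- (N * t^2))"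
proof -
  have "(\<Sum>w\<in>{w\<in>W D N. real (cnt k w) \<le> N * (q k - \<epsilon>)}. pw q w)
     \<le> exp (N * (q k * (exp (-t) - 1)) - (-t) * (N * (q k - \<epsilon>)))"
    by (rule tail_gen[OF k]) (auto intro: mult_left_mono t)
  also have "\<dots> \<le> exp (- (N * t^2))"
  proof -
    have "exp (-t) - 1 \<le> -t + t^2" using exp_minus_bound[OF t(1)] by simp
    then have "q k * (exp (-t) - 1) \<le> q k * (-t + t^2)" using q_nonneg[OF k] by (rule mult_left_mono)
    moreover have "q k * t^2 \<le> 1 * t^2" using q_le1[OF k] by (intro mult_right_mono) auto
    ultimately have "q k * (exp (-t) - 1) + t * (q k - \<epsilon>) \<le> -(t^2)"
      using t mult_left_mono[OF t(3), of t] by (simp add: algebra_simps power2_eq_square)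
    then have "real N * (q k * (exp (-t) - 1) + t * (q k - \<epsilon>)) \<le> real N * (-(t^2))"
      by (intro mult_left_mono) auto
    then show ?thesis by (simp add: algebra_simps)
  qed
  finally show ?thesis .
qed

lemma bad_words:
  assumes N: "N > 0" and t: "0 \<le> t" "t \<le> 1" "2 * t \<le> \<epsilon>"
  shows "(\<Sum>w\<in>{w\<in>W D N. \<exists>k\<le>D. \<bar>real (cnt k w) / N - q k\<bar> > \<epsilon>}. pw q w) \<le> 2 * (D+1) * exp (- (N * t^2))"
proof -
  let ?U = "\<lambda>k. {w\<in>W D N. real (cnt k w) \<ge> N * (q k + \<epsilon>)}"
  let ?L = "\<lambda>k. {w\<in>W D N. real (cnt k w) \<le> N * (q k - \<epsilon>)}"
  have sub: "{w\<in>W D N. \<exists>k\<le>D. \<bar>real (cnt k w) / N - q k\<bar> > \<epsilon>} \<subseteq> (\<Union>k\<le>D. ?U k \<union> ?L k)"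
  proof
    fix w assume "w \<in> {w\<in>W D N. \<exists>k\<le>D. \<bar>real (cnt k w) / N - q k\<bar> > \<epsilon>}"
    then obtain k where k: "k \<le> D" "w \<in> W D N" "\<bar>real (cnt k w) / N - q k\<bar> > \<epsilon>" by auto
    then have "real (cnt k w) / N > q k + \<epsilon> \<or> real (cnt k w) / N < q k - \<epsilon>" by auto
    then have "real (cnt k w) \<ge> N * (q k + \<epsilon>) \<or> real (cnt k w) \<le> N * (q k - \<epsilon>)"
      using N by (auto simp: field_simps)
    then show "w \<in> (\<Union>k\<le>D. ?U k \<union> ?L k)" using k by auto
  qed
  have "(\<Sum>w\<in>{w\<in>W D N. \<exists>k\<le>D. \<bar>real (cnt k w) / N - q k\<bar> > \<epsilon>}. pw q w) \<le> (\<Sum>w\<in>(\<Union>k\<le>D. ?U k \<union> ?L k). pw q w)"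
    using sub by (intro sum_mono2) (auto intro!: pw_nonneg W_set)
  also have "\<dots> \<le> (\<Sum>k\<le>D. \<Sum>w\<in>?U k \<union> ?L k. pw q w)"
    by (rule sum_UN_le_nonneg) (auto intro!: pw_nonneg W_set)
  also have "\<dots> \<le> (\<Sum>k\<le>D. (\<Sum>w\<in>?U k. pw q w) + (\<Sum>w\<in>?L k. pw q w))"
    by (intro sum_mono sum_Un_le_nonneg) (auto intro!: pw_nonneg W_set)
  also have "\<dots> \<le> (\<Sum>k\<le>D. 2 * exp (- (N * t^2)))"
  proof (rule sum_mono)
    fix k assume "k \<in> {..D}"
    then have k: "k \<le> D" by simp
    show "(\<Sum>w\<in>?U k. pw q w) + (\<Sum>w\<in>?L k. pw q w) \<le> 2 * exp (- (N * t^2))"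
      using upper_tail[OF k t, of N] lower_tail[OF k t, of N] by simp
  qed
  also have "\<dots> = 2 * (D+1) * exp (- (N * t^2))" by simp
  finally show ?thesis .
qed

end

lemma cycle_lemma:
  assumes len: "length w = N" and N: "N \<ge> 1" and sm: "sum_list w + 1 = N"
  shows "\<exists>r<N. F 1 (drop r w @ take r w)"
proof -
  define st where "st j = int (sum_list (take j w))" for j
  define s where "s j = st j - int j" for j
  define m where "m = Min (s ` {0..<N})"
  have fin: "finite (s ` {0..<N})" and ne: "s ` {0..<N} \<noteq> {}" using N by auto
  have ex: "\<exists>j. j < N \<and> s j = m" using Min_in[OF fin ne] unfolding m_def by auto
  define r where "r = (LEAST j. j < N \<and> s j = m)"
  have r: "r < N" "s r = m" using LeastI_ex[OF ex] unfolding r_def by auto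
  have min: "\<And>j. j < N \<Longrightarrow> s j \<ge> s r" using r Min_le[OF fin] unfolding m_def by auto
  have strict: "\<And>j. j < r \<Longrightarrow> s j > s r"
  proof -
    fix j assume j: "j < r"
    then have "\<not> (j < N \<and> s j = m)" using not_less_Least unfolding r_def by blast
    then show "s j > s r" using min[of j] j r by auto
  qed
  have stN: "st N = int N - 1" using sm len unfolding st_def by simp
  let ?v = "drop r w @ take r w"
  have lv: "length ?v = N" using len r by simp
  have sv: "sum_list ?v + 1 = length ?v"
  proof -
    have "sum_list w = sum_list (take r w) + sum_list (drop r w)"
      by (metis append_take_drop_id sum_list_append)
    then show ?thesis using sm lv by simp
  qed
  have pre: "l < sum_list (take l ?v) + 1" if l: "l < N" for l
  proof (cases "r + l \<le> N")
    case True
    have tl: "take l ?v = take l (drop r w)" using True len by simp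
    have "take (r + l) w = take r w @ take l (drop r w)" by (simp add: take_add)
    then have e: "st (r + l) = st r + int (sum_list (take l ?v))" unfolding st_def tl by simp
    show ?thesis
    proof (cases "r + l < N")
      case True
      have "s (r + l) \<ge> s r" using min[OF True] .
      then show ?thesis using e unfolding s_def by simp
    next
      case False
      then have rl: "r + l = N" using \<open>r + l \<le> N\<close> by simp
      then have "r > 0" using l by simp
      then have "s 0 > s r" using strict by simp
      then have "st r - int r \<le> -1" unfolding s_def st_def by simp
      then show ?thesis using e stN rl by simp
    qed
  next
    case False
    define i where "i = r + l - N"
    have i: "i < r" using False l unfolding i_def by simp
    have tl: "take l ?v = drop r w @ take i w" using False len l r(1) unfolding i_def by (auto simp: min_def add.commute)
    have "sum_list w = sum_list (take r w) + sum_list (drop r w)"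
      by (metis append_take_drop_id sum_list_append)
    then have e: "int (sum_list (take l ?v)) = st N - st r + st i"
      unfolding tl st_def using len by simp
    have "s i > s r" using strict[OF i] .
    then show ?thesis using e stN unfolding s_def i_def using False by simp
  qed
  show ?thesis using r(1) sv pre lv unfolding F_def by auto
qed

definition rot :: "nat \<Rightarrow> nat list \<Rightarrow> nat list" where "rot r w = drop r w @ take r w"

lemma pw_append: "pw q (u @ v) = pw q u * pw q v" by (simp add: pw_def)

lemma pw_rot: "pw q (rot r w) = pw q w"
proof -
  have "pw q w = pw q (take r w @ drop r w)" by simp
  then show ?thesis unfolding rot_def pw_append by simp
qed

lemma rot_W: "w \<in> W D N \<Longrightarrow> rot r w \<in> W D N"
  by (auto simp: W_def rot_def dest: in_set_takeD in_set_dropD)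

lemma inj_rot: "inj_on (rot r) (W D N)"
proof (rule inj_onI)
  fix u v assume u: "u \<in> W D N" and v: "v \<in> W D N" and e: "rot r u = rot r v"
  have l: "length u = length v" using u v by (simp add: W_def)
  then have "drop r u = drop r v \<and> take r u = take r v" using e unfolding rot_def
    by (simp add: append_eq_append_conv)
  then show "u = v" by (metis append_take_drop_id)
qed

context distr begin

lemma rot_bound:
  assumes N: "N \<ge> 1"
  shows "(\<Sum>w\<in>{w\<in>W D N. sum_list w + 1 = N}. pw q w) \<le> N * (\<Sum>w\<in>{w\<in>W D N. F 1 w}. pw q w)"
proof -
  let ?S = "{w\<in>W D N. sum_list w + 1 = N}"
  let ?L = "{w\<in>W D N. F 1 w}"
  let ?f = "\<lambda>r w. if rot r w \<in> ?L then pw q (rot r w) else 0"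
  have fnn: "\<And>r w. w \<in> W D N \<Longrightarrow> ?f r w \<ge> 0" using pw_nonneg[OF W_set[OF rot_W]] by auto
  have "(\<Sum>w\<in>?S. pw q w) \<le> (\<Sum>w\<in>?S. \<Sum>r<N. ?f r w)"
  proof (rule sum_mono)
    fix w assume w: "w \<in> ?S"
    then obtain r where r: "r < N" "F 1 (rot r w)"
      using cycle_lemma[of w N] N by (auto simp: W_def rot_def)
    have "pw q w = ?f r w" using r w rot_W pw_rot by auto
    also have "\<dots> \<le> (\<Sum>r<N. ?f r w)"
      by (rule member_le_sum) (use r w fnn in auto)
    finally show "pw q w \<le> (\<Sum>r<N. ?f r w)" .
  qed
  also have "\<dots> = (\<Sum>r<N. \<Sum>w\<in>?S. ?f r w)" by (rule sum.swap)
  also have "\<dots> \<le> (\<Sum>r<N. \<Sum>w\<in>?L. pw q w)"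
  proof (rule sum_mono)
    fix r
    have "(\<Sum>w\<in>?S. ?f r w) = (\<Sum>w\<in>{w\<in>?S. rot r w \<in> ?L}. pw q (rot r w))"
      by (simp add: sum.inter_filter) (rule sum.cong, auto)
    also have "\<dots> = (\<Sum>v\<in>rot r ` {w\<in>?S. rot r w \<in> ?L}. pw q v)"
      by (rule sum.reindex[symmetric, unfolded o_def]) (rule inj_on_subset[OF inj_rot[of r D N]], auto)
    also have "\<dots> \<le> (\<Sum>v\<in>?L. pw q v)"
      by (rule sum_mono2) (auto intro!: pw_nonneg W_set)
    finally show "(\<Sum>w\<in>?S. ?f r w) \<le> (\<Sum>v\<in>?L. pw q v)" .
  qed
  also have "\<dots> = N * (\<Sum>w\<in>?L. pw q w)" by simp
  finally show ?thesis .
qed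

lemma conv:
  "(\<Sum>u\<in>{u\<in>W D a. sum_list u = x}. pw q u) * (\<Sum>v\<in>{v\<in>W D b. sum_list v = y}. pw q v)
   \<le> (\<Sum>w\<in>{w\<in>W D (a+b). sum_list w = x+y}. pw q w)"
proof -
  let ?A = "{u\<in>W D a. sum_list u = x}" and ?B = "{v\<in>W D b. sum_list v = y}"
  have inj: "inj_on (\<lambda>(u,v). u @ v) (?A \<times> ?B)"
  proof (rule inj_onI)
    fix p p' assume p: "p \<in> ?A \<times> ?B" and p': "p' \<in> ?A \<times> ?B"
      and e: "(\<lambda>(u,v). u @ v) p = (\<lambda>(u,v). u @ v) p'"
    obtain u v u' v' where pp: "p = (u,v)" "p' = (u',v')" by (cases p, cases p')
    have "length u = length u'" using p p' pp by (simp add: W_def)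
    then have "u = u' \<and> v = v'" using e pp by simp
    then show "p = p'" using pp by simp
  qed
  have "(\<Sum>u\<in>?A. pw q u) * (\<Sum>v\<in>?B. pw q v) = (\<Sum>(u,v)\<in>?A \<times> ?B. pw q (u @ v))"
    by (simp add: sum_product sum.cartesian_product pw_append)
  also have "\<dots> = (\<Sum>w\<in>(\<lambda>(u,v). u @ v) ` (?A \<times> ?B). pw q w)"
    using sum.reindex[OF inj, of "pw q"] by (simp add: case_prod_beta o_def)
  also have "\<dots> \<le> (\<Sum>w\<in>{w\<in>W D (a+b). sum_list w = x+y}. pw q w)"
  proof (rule sum_mono2)
    show "finite {w\<in>W D (a+b). sum_list w = x+y}" by simp
  qed (auto simp: W_def intro!: pw_nonneg)
  finally show ?thesis .
qed

lemma window:
  assumes H: "H > 0" and small: "real a * var \<le> real H ^ 2 / 2"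
  shows "\<exists>x. \<bar>real x - real a\<bar> \<le> H \<and> (\<Sum>u\<in>{u\<in>W D a. sum_list u = x}. pw q u) \<ge> 1 / (2 * (2 * real H + 1))"
proof (rule ccontr)
  assume neg: "\<not> ?thesis"
  have lt: "(\<Sum>u\<in>{u\<in>W D a. sum_list u = x}. pw q u) < 1 / (2 * (2 * real H + 1))"
    if x: "\<bar>real x - real a\<bar> \<le> H" for x
  proof -
    from neg x have "\<not> (\<Sum>u\<in>{u\<in>W D a. sum_list u = x}. pw q u) \<ge> 1 / (2 * (2 * real H + 1))"
      by blast
    then show ?thesis by simp
  qed
  let ?E = "{u\<in>W D a. \<bar>real (sum_list u) - real a\<bar> \<le> H}"
  let ?C = "{u\<in>W D a. \<not> \<bar>real (sum_list u) - real a\<bar> \<le> H}"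
  have "(\<Sum>u\<in>?C. pw q u) \<le> (\<Sum>u\<in>?C. pw q u * (real (sum_list u) - a)^2 / H^2)"
  proof (rule sum_mono)
    fix u assume u: "u \<in> ?C"
    then have "H^2 \<le> (real (sum_list u) - a)^2" using H
      by (simp add: abs_le_square_iff[symmetric])
    then have "1 \<le> (real (sum_list u) - a)^2 / H^2" using H by simp
    from mult_left_mono[OF this pw_nonneg[OF W_set]] u
    show "pw q u \<le> pw q u * (real (sum_list u) - a)^2 / H^2" by auto
  qed
  also have "\<dots> \<le> (\<Sum>u\<in>W D a. pw q u * (real (sum_list u) - a)^2 / H^2)"
    by (rule sum_mono2) (auto intro!: divide_nonneg_nonneg mult_nonneg_nonneg pw_nonneg W_set)
  also have "\<dots> = a * var / H^2" using M2[of a] by (simp add: sum_divide_distrib[symmetric])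
  also have "\<dots> \<le> 1/2" using small H by (simp add: field_simps)
  finally have C: "(\<Sum>u\<in>?C. pw q u) \<le> 1/2" .
  have U: "?E \<union> ?C = W D a" by blast
  have "(\<Sum>u\<in>?E. pw q u) + (\<Sum>u\<in>?C. pw q u) = (\<Sum>u\<in>?E \<union> ?C. pw q u)"
    by (rule sum.union_disjoint[symmetric]) auto
  then have "(\<Sum>u\<in>?E. pw q u) + (\<Sum>u\<in>?C. pw q u) = 1"
    using M0[of a] unfolding U by simp
  then have E: "(\<Sum>u\<in>?E. pw q u) \<ge> 1/2" using C by simp
  have "(\<Sum>u\<in>?E. pw q u) = (\<Sum>x\<in>sum_list ` ?E. \<Sum>u\<in>{u\<in>?E. sum_list u = x}. pw q u)"
    by (rule sum.image_gen) simp
  also have "\<dots> < (\<Sum>x\<in>sum_list ` ?E. 1 / (2 * (2 * real H + 1)))"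
  proof (rule sum_strict_mono)
    show "finite (sum_list ` ?E)" by simp
    show "sum_list ` ?E \<noteq> {}"
    proof
      assume "sum_list ` ?E = {}"
      then have "?E = {}" by blast
      then have "(\<Sum>u\<in>?E. pw q u) = 0" by (simp only: sum.empty)
      then show False using E by linarith
    qed
    fix x assume "x \<in> sum_list ` ?E"
    then have x: "\<bar>real x - real a\<bar> \<le> H" by auto
    have "(\<Sum>u\<in>{u\<in>?E. sum_list u = x}. pw q u) \<le> (\<Sum>u\<in>{u\<in>W D a. sum_list u = x}. pw q u)"
      by (rule sum_mono2) (auto intro!: pw_nonneg W_set)
    then show "(\<Sum>u\<in>{u\<in>?E. sum_list u = x}. pw q u) < 1 / (2 * (2 * real H + 1))" using lt[OF x] by simp
  qed
  also have "\<dots> = card (sum_list ` ?E) / (2 * (2 * real H + 1))" by simp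
  also have "\<dots> \<le> (2 * real H + 1) / (2 * (2 * real H + 1))"
  proof -
    have "sum_list ` ?E \<subseteq> {a - H .. a + H}"
    proof
      fix x assume "x \<in> sum_list ` ?E"
      then have "\<bar>real x - real a\<bar> \<le> H" by auto
      then have "x \<le> a + H" "a \<le> x + H" by linarith+
      then show "x \<in> {a - H .. a + H}" by simp
    qed
    then have "card (sum_list ` ?E) \<le> card {a - H .. a + H}" by (intro card_mono) auto
    also have "\<dots> \<le> 2 * H + 1" by simp
    finally have "real (card (sum_list ` ?E)) \<le> 2 * H + 1" by linarith
    then show ?thesis by (intro divide_right_mono) auto
  qed
  also have "\<dots> = 1/2" by simp
  finally have "(\<Sum>u\<in>?E. pw q u) < 1/2" .
  then show False using E by simp
qed

end

locale distr2 = distr +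
  assumes D2: "D \<ge> 2" and qpos: "\<And>k. k \<le> D \<Longrightarrow> q k > 0"
begin

definition "mq = min (q 0) (min (q 1) (q 2))"
definition "L = - ln mq"

lemma mq_pos: "mq > 0" using qpos D2 unfolding mq_def by auto

lemma mq_lt1: "mq < 1"
proof -
  have "q 0 + q 1 \<le> (\<Sum>k\<le>D. q k)"
  proof -
    have "(\<Sum>k\<in>{0,1}. q k) \<le> (\<Sum>k\<le>D. q k)" using D2 by (intro sum_mono2) (auto intro: q_nonneg)
    then show ?thesis by simp
  qed
  then have "q 0 < 1" using qpos[of 1] D2 q_sum by simp
  then show ?thesis unfolding mq_def by simp
qed

lemma L_pos: "L > 0" using mq_pos mq_lt1 unfolding L_def by simp

lemma mq_pow: "mq ^ n = exp (- L * n)"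
proof -
  have "exp (- L * n) = exp (real n * ln mq)" unfolding L_def by (simp add: mult.commute)
  also have "\<dots> = exp (ln mq) ^ n" by (rule exp_of_nat_mult)
  also have "\<dots> = mq ^ n" using mq_pos by simp
  finally show ?thesis by simp
qed

lemma pw_ge_mq: "set v \<subseteq> {0,1,2} \<Longrightarrow> pw q v \<ge> mq ^ length v"
proof (induction v)
  case Nil then show ?case by (simp add: pw_def)
next
  case (Cons x v)
  have "mq \<le> q x" using Cons.prems unfolding mq_def by auto
  moreover have "mq ^ length v \<le> pw q v" using Cons by simp
  ultimately have "mq * mq ^ length v \<le> q x * pw q v"
    using mq_pos by (intro mult_mono) auto
  then show ?case by (simp add: pw_def)
qed

lemma explicit_word:
  assumes y: "y \<le> 2 * b"
  shows "(\<Sum>v\<in>{v\<in>W D b. sum_list v = y}. pw q v) \<ge> mq ^ b"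
proof -
  define v where "v = replicate (y div 2) (2::nat) @ replicate (y mod 2) 1 @ replicate (b - y div 2 - y mod 2) 0"
  have le: "y div 2 + y mod 2 \<le> b" using y by presburger
  have lv: "length v = b" using le unfolding v_def by simp
  have sv: "sum_list v = y" unfolding v_def by (simp add: sum_list_replicate)
  have setv: "set v \<subseteq> {0,1,2}" unfolding v_def by auto
  then have vW: "v \<in> {v\<in>W D b. sum_list v = y}" using D2 lv sv unfolding W_def by auto
  have "mq ^ b \<le> pw q v" using pw_ge_mq[OF setv] lv by simp
  also have "\<dots> \<le> (\<Sum>v\<in>{v\<in>W D b. sum_list v = y}. pw q v)"
    by (rule member_le_sum[OF vW]) (auto intro!: pw_nonneg W_set)
  finally show ?thesis .
qed

lemma var_nonneg: "var \<ge> 0"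
  unfolding var_def by (intro sum_nonneg mult_nonneg_nonneg q_nonneg) auto

lemma den_lower:
  assumes \<delta>: "\<delta> > 0"
  shows "\<exists>N0. \<forall>N\<ge>N0. (\<Sum>w\<in>{w\<in>W D N. F 1 w}. pw q w) \<ge> exp (- \<delta> * N - 2 * L) / (2 * N * (N + 3))"
proof -
  define \<eta> where "\<eta> = min (1/4) (\<delta> / L)"
  have \<eta>: "\<eta> > 0" "\<eta> \<le> 1/4" "\<eta> * L \<le> \<delta>" using \<delta> L_pos unfolding \<eta>_def
    by (auto simp: min_def field_simps)
  define N0 where "N0 = max 8 (nat \<lceil>2 * var / \<eta>^2\<rceil>)"
  have "(\<Sum>w\<in>{w\<in>W D N. F 1 w}. pw q w) \<ge> exp (- \<delta> * N - 2 * L) / (2 * real N * (real N + 3))"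
    if N: "N \<ge> N0" for N
  proof -
    have N8: "N \<ge> 8" using N unfolding N0_def by simp
    have Nv: "real N \<ge> 2 * var / \<eta>^2" using N unfolding N0_def by linarith
    define H where "H = nat \<lceil>\<eta> * N\<rceil>"
    have H0: "\<eta> * N \<ge> 0" using \<eta> by simp
    then have Hr: "real H = real_of_int \<lceil>\<eta> * N\<rceil>" unfolding H_def by simp
    have H1: "real H \<ge> \<eta> * N" "real H \<le> \<eta> * N + 1" unfolding Hr using ceiling_correct[of "\<eta> * N"] by linarith+
    have etaN: "\<eta> * N \<le> (1/4) * N" using \<eta> by (intro mult_right_mono) auto
    have "\<eta> * N > 0" using \<eta> N8 by simp
    then have "real H > 0" using H1(1) by linarith
    then have Hpos: "H > 0" by simp
    define b where "b = H + 1"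
    have bN: "b \<le> N"
    proof -
      have "real H \<le> N / 4 + 1" using H1 etaN by linarith
      then show ?thesis unfolding b_def using N8 by linarith
    qed
    define a where "a = N - b"
    have small: "real a * var \<le> real H ^ 2 / 2"
    proof -
      have "real a * var \<le> N * var" using var_nonneg unfolding a_def by (intro mult_right_mono) auto
      also have "\<dots> \<le> N * (\<eta>^2 * N / 2)"
        using Nv \<eta> by (intro mult_left_mono) (auto simp: field_simps)
      also have "\<dots> = (\<eta> * N)^2 / 2" by (simp add: power2_eq_square)
      also have "\<dots> \<le> real H ^ 2 / 2" using H1 \<eta> by (intro divide_right_mono power_mono) auto
      finally show ?thesis .
    qed
    obtain x where x: "\<bar>real x - real a\<bar> \<le> H"
      and Px: "(\<Sum>u\<in>{u\<in>W D a. sum_list u = x}. pw q u) \<ge> 1 / (2 * (2 * real H + 1))"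
      using window[OF Hpos small] by blast
    have "real x \<le> real (a + H)" "real a \<le> real (x + H)" using x by auto
    then have xa: "x \<le> a + H" "a \<le> x + H" by (simp_all only: of_nat_le_iff)
    have xN: "x + 1 \<le> N" using xa bN unfolding a_def b_def by linarith
    define y where "y = N - 1 - x"
    have ry: "real y = real N - 1 - real x" using xN unfolding y_def by (simp add: of_nat_diff)
    have ra: "real a = real N - real b" using bN unfolding a_def by (simp add: of_nat_diff)
    have "real a \<le> real x + real H" using xa by simp
    then have "real y \<le> real (2 * b)" using ry ra unfolding b_def by simp
    then have y2: "y \<le> 2 * b" by (simp only: of_nat_le_iff)
    have ab: "a + b = N" "x + y = N - 1" using bN xN unfolding a_def y_def by auto
    have Py: "(\<Sum>v\<in>{v\<in>W D b. sum_list v = y}. pw q v) \<ge> mq ^ b" by (rule explicit_word[OF y2])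
    have "1 / (2 * (2 * real H + 1)) * mq ^ b \<le>
      (\<Sum>u\<in>{u\<in>W D a. sum_list u = x}. pw q u) * (\<Sum>v\<in>{v\<in>W D b. sum_list v = y}. pw q v)"
      using Px Py mq_pos by (intro mult_mono) (auto intro!: sum_nonneg pw_nonneg W_set)
    also have "\<dots> \<le> (\<Sum>w\<in>{w\<in>W D N. sum_list w = N - 1}. pw q w)"
      using conv[of a x b y] ab by simp
    also have "\<dots> = (\<Sum>w\<in>{w\<in>W D N. sum_list w + 1 = N}. pw q w)"
      using N8 by (intro sum.cong) auto
    also have "\<dots> \<le> N * (\<Sum>w\<in>{w\<in>W D N. F 1 w}. pw q w)"
      using rot_bound N8 by simp
    finally have A: "mq ^ b / (2 * (2 * real H + 1)) \<le> N * (\<Sum>w\<in>{w\<in>W D N. F 1 w}. pw q w)" by simp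
    have e1: "exp (- \<delta> * N - 2 * L) \<le> mq ^ b"
    proof -
      have "L * b \<le> L * (\<eta> * N + 2)" using H1 L_pos unfolding b_def by (intro mult_left_mono) auto
      also have "\<dots> = (\<eta> * L) * N + 2 * L" by (simp add: algebra_simps)
      also have "\<dots> \<le> \<delta> * N + 2 * L" using \<eta> by (intro add_right_mono mult_right_mono) auto
      finally show ?thesis unfolding mq_pow by simp
    qed
    have N0r: "real N \<ge> 0" by simp
    have "real H \<le> N / 4 + 1" using H1 etaN by linarith
    then have e2: "2 * (2 * real H + 1) \<le> 2 * (real N + 3)" using N0r by (simp add: field_simps)
    have "exp (- \<delta> * N - 2 * L) / (2 * (real N + 3)) \<le> mq ^ b / (2 * (2 * real H + 1))"
      using e1 e2 mq_pos by (intro frac_le) auto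
    then have "exp (- \<delta> * N - 2 * L) / (2 * (real N + 3)) \<le> N * (\<Sum>w\<in>{w\<in>W D N. F 1 w}. pw q w)"
      using A by linarith
    then have h: "exp (- \<delta> * N - 2 * L) / (2 * (real N + 3)) \<le> (\<Sum>w\<in>{w\<in>W D N. F 1 w}. pw q w) * N"
      by (simp add: mult.commute)
    have Npos: "real N > 0" using N8 by simp
    have "exp (- \<delta> * N - 2 * L) / (2 * real N * (real N + 3)) = exp (- \<delta> * N - 2 * L) / (2 * (real N + 3)) / real N"
      by (simp add: divide_divide_eq_left mult.commute mult.left_commute)
    also have "\<dots> \<le> (\<Sum>w\<in>{w\<in>W D N. F 1 w}. pw q w)"
      using h Npos by (simp only: pos_divide_le_eq)
    finally show ?thesis .
  qed
  then show ?thesis by (intro exI[of _ N0] allI impI)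
qed

end

lemma exists_theta:
  fixes wt :: "nat \<Rightarrow> real"
  assumes D: "D \<ge> 2" and wt: "\<And>k. k \<le> D \<Longrightarrow> wt k > 0"
  shows "\<exists>\<theta>>0. (\<Sum>k\<le>D. (real k - 1) * wt k * \<theta>^k) = 0"
proof -
  define g where "g \<theta> = (\<Sum>k\<le>D. (real k - 1) * wt k * \<theta>^k)" for \<theta> :: real
  obtain D' where D': "D = Suc D'" using D by (cases D) auto
  have gs: "g \<theta> = - wt 0 + (\<Sum>i\<le>D'. real i * wt (Suc i) * \<theta>^(Suc i))" for \<theta>
    unfolding g_def D' by (subst sum.atMost_Suc_shift) simp
  have g0: "g 0 < 0" using wt[of 0] unfolding gs by simp
  define \<theta>1 where "\<theta>1 = 1 + wt 0 / wt D"
  have wtnn: "\<And>k. k \<le> D \<Longrightarrow> wt k \<ge> 0" using wt less_imp_le by blast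
  have wD: "wt D > 0" and w0: "wt 0 > 0" using wt by auto
  have \<theta>1: "\<theta>1 \<ge> 1" using w0 wD unfolding \<theta>1_def by simp
  have "real D' * wt (Suc D') * \<theta>1^(Suc D') \<le> (\<Sum>i\<le>D'. real i * wt (Suc i) * \<theta>1^(Suc i))"
    by (rule member_le_sum) (use wtnn \<theta>1 D' in \<open>auto intro!: mult_nonneg_nonneg\<close>)
  moreover have "wt D * \<theta>1 \<le> real D' * wt D * \<theta>1^D"
  proof -
    have "\<theta>1 \<le> \<theta>1 ^ D" using \<theta>1 D by (simp add: power_increasing[of 1 D \<theta>1, simplified])
    moreover have "1 \<le> real D'" using D D' by simp
    ultimately have "1 * \<theta>1 \<le> real D' * \<theta>1^D" using \<theta>1 by (intro mult_mono) auto
    then show ?thesis using wD by (simp add: mult.assoc mult.left_commute)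
  qed
  moreover have "wt D * \<theta>1 = wt D + wt 0" using wD unfolding \<theta>1_def by (simp add: field_simps)
  ultimately have g1: "g \<theta>1 > 0" unfolding gs using D' wD by simp
  have cont: "continuous_on {0..\<theta>1} g" unfolding g_def by (intro continuous_intros)
  obtain x where x: "0 \<le> x" "x \<le> \<theta>1" "g x = 0"
    using IVT'[of g 0 0 \<theta>1, OF less_imp_le[OF g0] less_imp_le[OF g1] _ cont] \<theta>1 by auto
  have "x \<noteq> 0" using x g0 by auto
  then have "x > 0" using x by simp
  then show ?thesis using x unfolding g_def by blast
qed

definition ent :: "real \<Rightarrow> real" where "ent x = (if x = 0 then 0 else x * ln x)"

lemma gfun_nonneg: assumes y: "y > 0" and x: "x \<ge> 0" shows "ent x - x * ln y - x + y \<ge> 0"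
proof (cases "x = 0")
  case True then show ?thesis using y by (simp add: ent_def)
next
  case False
  then have xp: "x > 0" using x by simp
  have "ln (y / x) \<le> y / x - 1" using xp y by (intro ln_le_minus_one) simp
  then have "x * ln (y / x) \<le> x * (y / x - 1)" using xp by (intro mult_left_mono) auto
  moreover have "ln (y / x) = ln y - ln x" using xp y by (simp add: ln_div)
  moreover have "x * (y / x - 1) = y - x" using xp by (simp add: field_simps)
  ultimately have "x * (ln y - ln x) \<le> y - x" by simp
  then show ?thesis using False by (simp add: ent_def algebra_simps)
qed

lemma gfun_zero: assumes y: "y > 0" and x: "x \<ge> 0" and z: "ent x - x * ln y - x + y = 0" shows "x = y"
proof (cases "x = 0")
  case True then show ?thesis using y z by (simp add: ent_def)
next
  case False
  then have xp: "x > 0" using x by simp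
  have l: "ln (y / x) = ln y - ln x" using xp y by (simp add: ln_div)
  have "x * (y / x - 1) = y - x" using xp by (simp add: field_simps)
  then have "x * (ln (y / x) - (y / x - 1)) = x * ln y - x * ln x - (y - x)"
    unfolding l by (simp add: algebra_simps)
  also have "\<dots> = 0" using z False by (simp add: ent_def algebra_simps)
  finally have "x * (ln (y / x) - (y / x - 1)) = 0" .
  then have "ln (y / x) = y / x - 1" using xp by simp
  then have "y / x = 1" using xp y by (intro ln_eq_minus_one) auto
  then show ?thesis using xp by simp
qed

lemma identify:
  fixes q p c :: "nat \<Rightarrow> real" and \<beta> A B :: real
  assumes qpos: "\<And>k. k \<le> D \<Longrightarrow> q k > 0" and qs: "(\<Sum>k\<le>D. q k) = 1" and qm: "(\<Sum>k\<le>D. real k * q k) = 1"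
    and hq: "\<And>k. k \<le> D \<Longrightarrow> \<beta> * c k = - ln (q k) + real k * A + B"
    and p: "p \<in> Mset D" and le: "Jfun \<beta> c D p \<le> Jfun \<beta> c D q"
  shows "\<And>k. k \<le> D \<Longrightarrow> p k = q k"
proof -
  have ps: "(\<Sum>k\<le>D. p k) = 1" and pm: "(\<Sum>k\<le>D. real k * p k) = 1" and pn: "\<And>k. k \<le> D \<Longrightarrow> p k \<ge> 0"
    using p unfolding Mset_def by auto
  have J: "Jfun \<beta> c D r = (\<Sum>k\<le>D. ent (r k) - r k * ln (q k)) + A + B"
    if rs: "(\<Sum>k\<le>D. r k) = 1" and rm: "(\<Sum>k\<le>D. real k * r k) = 1" for r
  proof -
    have "\<beta> * (\<Sum>k\<le>D. r k * c k) = (\<Sum>k\<le>D. r k * (\<beta> * c k))"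
      by (simp add: sum_distrib_left algebra_simps)
    also have "\<dots> = (\<Sum>k\<le>D. r k * (- ln (q k) + real k * A + B))"
      using hq by (intro sum.cong) auto
    also have "\<dots> = (\<Sum>k\<le>D. - (r k * ln (q k)) + A * (real k * r k) + B * r k)"
      by (intro sum.cong) (auto simp: algebra_simps)
    also have "\<dots> = - (\<Sum>k\<le>D. r k * ln (q k)) + A * (\<Sum>k\<le>D. real k * r k) + B * (\<Sum>k\<le>D. r k)"
      by (simp only: sum.distrib sum_negf sum_distrib_left)
    finally have "\<beta> * (\<Sum>k\<le>D. r k * c k) = - (\<Sum>k\<le>D. r k * ln (q k)) + A + B" using rs rm by simp
    moreover have "(\<Sum>k\<le>D. (if r k = 0 then 0 else r k * ln (r k))) = (\<Sum>k\<le>D. ent (r k))"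
      by (simp add: ent_def)
    ultimately show ?thesis unfolding Jfun_def by (simp add: sum_subtractf)
  qed
  have Jq: "Jfun \<beta> c D q = A + B"
  proof -
    have "(\<Sum>k\<le>D. ent (q k) - q k * ln (q k)) = 0"
      using qpos by (intro sum.neutral) (auto simp: ent_def dest: less_imp_neq[symmetric])
    then show ?thesis using J[OF qs qm] by simp
  qed
  have "(\<Sum>k\<le>D. ent (p k) - p k * ln (q k) - p k + q k) = (\<Sum>k\<le>D. ent (p k) - p k * ln (q k))"
    using ps qs by (simp add: sum.distrib sum_subtractf)
  also have "\<dots> = Jfun \<beta> c D p - Jfun \<beta> c D q" using J[OF ps pm] Jq by simp
  also have "\<dots> \<le> 0" using le by simp
  finally have S: "(\<Sum>k\<le>D. ent (p k) - p k * ln (q k) - p k + q k) \<le> 0" .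
  have nn: "\<forall>k\<in>{..D}. ent (p k) - p k * ln (q k) - p k + q k \<ge> 0"
    using gfun_nonneg qpos pn by auto
  then have "(\<Sum>k\<le>D. ent (p k) - p k * ln (q k) - p k + q k) = 0"
    using S sum_nonneg[of "{..D}"] by (meson antisym)
  then have "\<forall>k\<in>{..D}. ent (p k) - p k * ln (q k) - p k + q k = 0"
    using nn by (subst sum_nonneg_eq_0_iff[symmetric]) auto
  then show "\<And>k. k \<le> D \<Longrightarrow> p k = q k" using gfun_zero qpos pn by auto
qed

lemma cnt_sum: "set w \<subseteq> {..D} \<Longrightarrow> (\<Sum>k\<le>D. f k * real (cnt k w)) = sum_list (map f w)"
proof (induction w)
  case Nil then show ?case by simp
next
  case (Cons x w)
  have "(\<Sum>k\<le>D. f k * real (cnt k (x # w))) = (\<Sum>k\<le>D. (if k = x then f k else 0) + f k * real (cnt k w))"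
    by (intro sum.cong) (auto simp: algebra_simps)
  also have "\<dots> = f x + (\<Sum>k\<le>D. f k * real (cnt k w))"
    using Cons.prems by (simp add: sum.distrib)
  finally show ?case using Cons by simp
qed

lemma exp_sum_list: fixes \<beta> :: real and c :: "nat \<Rightarrow> real" shows "exp (- \<beta> * sum_list (map c w)) = prod_list (map (\<lambda>k. exp (- \<beta> * c k)) w)"
proof (induction w)
  case (Cons a w)
  have "exp (- \<beta> * sum_list (map c (a # w))) = exp (- \<beta> * c a) * exp (- \<beta> * sum_list (map c w))"
    by (simp only: list.map sum_list.Cons distrib_left exp_add)
  then show ?case using Cons by simp
qed simp

lemma pw_form: fixes Z \<theta> :: real shows "Z \<noteq> 0 \<Longrightarrow> pw (\<lambda>k. wt k * \<theta>^k / Z) w = prod_list (map wt w) * \<theta>^(sum_list w) / Z^(length w)"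
  by (induction w) (auto simp: pw_def power_add)

lemma enc_trees: "T \<in> trees N D \<Longrightarrow> enc T \<in> W D N"
  by (auto simp: trees_def W_def length_enc deg_enc)

lemma finite_trees: "finite (trees N D)"
proof -
  have "enc ` trees N D \<subseteq> W D N" using enc_trees by blast
  then have "finite (enc ` trees N D)" using finite_subset finite_W by blast
  then show ?thesis using finite_imageD inj_on_subset[OF enc_inj] by blast
qed

lemma F1_sub: "{w\<in>W D N. F 1 w} \<subseteq> enc ` trees N D"
proof
  fix w assume w: "w \<in> {w\<in>W D N. F 1 w}"
  then obtain ts where ts: "length ts = 1" "concat (map enc ts) = w" "list_all (deg_le D) ts"
    using F_dec[of 1 w D] by (auto simp: W_def)
  then obtain T where T: "ts = [T]" by (cases ts) auto
  have "enc T = w" "deg_le D T" using ts T by auto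
  moreover have "nverts T = N" using w \<open>enc T = w\<close> length_enc[of T] by (simp add: W_def)
  ultimately show "w \<in> enc ` trees N D" unfolding trees_def by blast
qed

lemma lim_aux:
  fixes c C :: real
  assumes c: "c > 0"
  shows "(\<lambda>N. C * (real N * (real N + 3) * exp (- c * N))) \<longlonglongrightarrow> 0"
proof -
  have "(\<lambda>N. real N * (real N + 3) * exp (- c * N)) \<longlonglongrightarrow> 0"
  proof (rule real_tendsto_sandwich[of "\<lambda>N. 0" _ _ "\<lambda>N. (108 / c^3) / real N"])
    show "eventually (\<lambda>N. 0 \<le> real N * (real N + 3) * exp (- c * N)) sequentially" by simp
    show "eventually (\<lambda>N. real N * (real N + 3) * exp (- c * N) \<le> (108 / c^3) / real N) sequentially"
    proof (rule eventually_sequentiallyI[of 1])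
      fix N :: nat assume N: "N \<ge> 1"
      then have Np: "real N > 0" by simp
      have "exp (c * N) = exp (c * N / 3) ^ 3" by (simp add: exp_of_nat_mult[symmetric])
      moreover have "c * N / 3 \<le> exp (c * N / 3)"
        using exp_ge_add_one_self[of "c * N / 3"] by linarith
      moreover have "0 \<le> c * N / 3" using c by simp
      ultimately have e: "(c * N / 3) ^ 3 \<le> exp (c * N)" by (metis power_mono)
      have cn: "(c * N / 3) ^ 3 > 0" using c Np by simp
      have "real N * (real N + 3) \<le> 4 * real N ^ 2" using N by (simp add: power2_eq_square algebra_simps)
      then have l4: "real N * (real N + 3) / exp (c * N) \<le> 4 * real N ^ 2 / exp (c * N)"
        by (rule divide_right_mono) simp
      have "real N * (real N + 3) * exp (- c * N) = real N * (real N + 3) / exp (c * N)"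
        by (simp add: exp_minus field_simps)
      also have "\<dots> \<le> 4 * real N ^ 2 / exp (c * N)" by (rule l4)
      also have "\<dots> \<le> 4 * real N ^ 2 / (c * N / 3) ^ 3"
        using e cn by (intro divide_left_mono) auto
      also have "\<dots> = (108 / c^3) / real N" using Np c by (simp add: field_simps power3_eq_cube power2_eq_square)
      finally show "real N * (real N + 3) * exp (- c * N) \<le> (108 / c^3) / real N" .
    qed
  qed (rule tendsto_const, rule lim_const_over_n)
  from tendsto_mult[OF tendsto_const[of C] this] show ?thesis by simp
qed

lemma main_D2:
  fixes D :: nat and \<beta> :: real and c p :: "nat \<Rightarrow> real" and \<epsilon> :: real
  assumes D2: "D \<ge> 2" and \<beta>: "\<beta> > 0" and p: "p \<in> Mset D"
    and pmin: "\<forall>q\<in>Mset D. Jfun \<beta> c D p \<le> Jfun \<beta> c D q" and \<epsilon>: "\<epsilon> > 0"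
  shows "(\<lambda>N. gibbs_prob \<beta> c D N {T. \<exists>k\<le>D. \<bar>real (chi k T) / real N - p k\<bar> > \<epsilon>}) \<longlonglongrightarrow> 0"
proof -
  define wt where "wt k = exp (- \<beta> * c k)" for k
  have wtpos: "\<And>k. wt k > 0" unfolding wt_def by simp
  obtain \<theta> where \<theta>: "\<theta> > 0" "(\<Sum>k\<le>D. (real k - 1) * wt k * \<theta>^k) = 0"
    using exists_theta[OF D2, of wt] wtpos by blast
  define Z where "Z = (\<Sum>k\<le>D. wt k * \<theta>^k)"
  have Z: "Z > 0" unfolding Z_def by (intro sum_pos) (auto simp: wtpos \<theta>)
  define q where "q = (\<lambda>k. wt k * \<theta>^k / Z)"
  have qpos: "\<And>k. q k > 0" unfolding q_def using wtpos \<theta> Z by simp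
  have qs: "(\<Sum>k\<le>D. q k) = 1" unfolding q_def Z_def using Z unfolding Z_def
    by (simp add: sum_divide_distrib[symmetric])
  have qm: "(\<Sum>k\<le>D. real k * q k) = 1"
  proof -
    have "(\<Sum>k\<le>D. (real k - 1) * wt k * \<theta>^k) = (\<Sum>k\<le>D. real k * (wt k * \<theta>^k)) - Z"
      unfolding Z_def by (simp add: sum_subtractf[symmetric] algebra_simps)
    then have "(\<Sum>k\<le>D. real k * (wt k * \<theta>^k)) = Z" using \<theta> by simp
    then show ?thesis unfolding q_def using Z
      by (simp add: sum_divide_distrib[symmetric] mult.assoc)
  qed
  interpret distr2 D q
    by unfold_locales (use qpos qs qm D2 in \<open>auto intro: less_imp_le\<close>)
  have hq: "\<beta> * c k = - ln (q k) + real k * ln \<theta> + (- ln Z)" if "k \<le> D" for k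
  proof -
    have p1: "wt k * \<theta>^k > 0" using wtpos \<theta> by simp
    have "ln (q k) = ln (wt k * \<theta>^k) - ln Z"
      unfolding q_def by (rule ln_divide_pos[OF p1 Z])
    also have "ln (wt k * \<theta>^k) = ln (wt k) + ln (\<theta>^k)"
      by (rule ln_mult_pos) (use wtpos \<theta> in auto)
    finally have "ln (q k) = ln (wt k) + ln (\<theta>^k) - ln Z" .
    also have "\<dots> = - \<beta> * c k + real k * ln \<theta> - ln Z" using \<theta> by (simp add: wt_def ln_realpow)
    finally show ?thesis by simp
  qed
  have qM: "q \<in> Mset D" unfolding Mset_def using qs qm q_le1 q_nonneg by auto
  have pq: "\<And>k. k \<le> D \<Longrightarrow> p k = q k"
    using identify[of D q \<beta> c "ln \<theta>" "- ln Z" p, OF qpos qs qm hq p] pmin qM by blast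
  define t where "t = min \<epsilon> 1 / 2"
  have t: "0 \<le> t" "t \<le> 1" "2 * t \<le> \<epsilon>" "t > 0" using \<epsilon> unfolding t_def by auto
  obtain N0 where N0: "\<And>N. N \<ge> N0 \<Longrightarrow>
      (\<Sum>w\<in>{w\<in>W D N. F 1 w}. pw q w) \<ge> exp (- (t^2/2) * N - 2 * L) / (2 * N * (N + 3))"
    using den_lower[of "t^2/2"] t by auto
  have bound: "gibbs_prob \<beta> c D N {T. \<exists>k\<le>D. \<bar>real (chi k T) / real N - p k\<bar> > \<epsilon>}
      \<le> 4 * (D+1) * exp (2 * L) * (real N * (real N + 3) * exp (- (t^2/2) * N))"
    if N: "N \<ge> max N0 1" for N
  proof -
    let ?A = "{T. \<exists>k\<le>D. \<bar>real (chi k T) / real N - p k\<bar> > \<epsilon>}"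
    have N1: "N \<ge> 1" using N by simp
    define K where "K = Z^N / \<theta>^(N-1)"
    have K: "K > 0" unfolding K_def using Z \<theta> by simp
    have hw: "exp (- \<beta> * energy c D T) = pw q (enc T) * K" if T: "T \<in> trees N D" for T
    proof -
      have sD: "set (enc T) \<subseteq> {..D}" using T by (simp add: trees_def deg_enc)
      have le: "length (enc T) = N" and se: "sum_list (enc T) = N - 1"
        using T length_enc[of T] sum_enc[of T] by (auto simp: trees_def)
      have "energy c D T = sum_list (map c (enc T))"
        unfolding energy_def chi_enc using cnt_sum[OF sD, of c] by simp
      then have "exp (- \<beta> * energy c D T) = prod_list (map wt (enc T))"
        using exp_sum_list[of \<beta> c "enc T"] unfolding wt_def by simp
      moreover have "pw q (enc T) = prod_list (map wt (enc T)) * \<theta>^(N-1) / Z^N"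
        unfolding q_def using pw_form[of Z wt \<theta> "enc T"] Z le se by simp
      ultimately show ?thesis unfolding K_def using Z \<theta> by (simp add: field_simps)
    qed
    have gp: "gibbs_prob \<beta> c D N ?A = (\<Sum>T\<in>trees N D \<inter> ?A. pw q (enc T)) / (\<Sum>T\<in>trees N D. pw q (enc T))"
    proof -
      have "gibbs_prob \<beta> c D N ?A = (\<Sum>T\<in>trees N D \<inter> ?A. pw q (enc T) * K) / (\<Sum>T\<in>trees N D. pw q (enc T) * K)"
      proof -
        have e1: "(\<Sum>T\<in>trees N D \<inter> ?A. exp (- \<beta> * energy c D T)) = (\<Sum>T\<in>trees N D \<inter> ?A. pw q (enc T) * K)"
          using hw by (intro sum.cong) auto
        have e2: "(\<Sum>T\<in>trees N D. exp (- \<beta> * energy c D T)) = (\<Sum>T\<in>trees N D. pw q (enc T) * K)"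
          using hw by (intro sum.cong) auto
        show ?thesis unfolding gibbs_prob_def e1 e2 ..
      qed
      also have "\<dots> = ((\<Sum>T\<in>trees N D \<inter> ?A. pw q (enc T)) * K) / ((\<Sum>T\<in>trees N D. pw q (enc T)) * K)"
        by (simp add: sum_distrib_right)
      also have "\<dots> = (\<Sum>T\<in>trees N D \<inter> ?A. pw q (enc T)) / (\<Sum>T\<in>trees N D. pw q (enc T))"
        using K by simp
      finally show ?thesis .
    qed
    let ?BW = "{w\<in>W D N. \<exists>k\<le>D. \<bar>real (cnt k w) / N - q k\<bar> > \<epsilon>}"
    have num: "(\<Sum>T\<in>trees N D \<inter> ?A. pw q (enc T)) \<le> 2 * (D+1) * exp (- (N * t^2))"
    proof -
      have "(\<Sum>T\<in>trees N D \<inter> ?A. pw q (enc T)) = (\<Sum>w\<in>enc ` (trees N D \<inter> ?A). pw q w)"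
        by (rule sum.reindex[symmetric, unfolded o_def]) (rule inj_on_subset[OF enc_inj], simp)
      also have "\<dots> \<le> (\<Sum>w\<in>?BW. pw q w)"
      proof (rule sum_mono2)
        show "finite ?BW" by simp
        show "enc ` (trees N D \<inter> ?A) \<subseteq> ?BW"
        proof
          fix w assume "w \<in> enc ` (trees N D \<inter> ?A)"
          then obtain T where T: "T \<in> trees N D" "T \<in> ?A" "w = enc T" by blast
          then obtain k where k: "k \<le> D" "\<bar>real (chi k T) / real N - p k\<bar> > \<epsilon>" by blast
          then have "\<bar>real (cnt k w) / N - q k\<bar> > \<epsilon>" using pq T by (simp add: chi_enc)
          then show "w \<in> ?BW" using k T enc_trees by blast
        qed
        show "\<And>w. w \<in> ?BW - enc ` (trees N D \<inter> ?A) \<Longrightarrow> 0 \<le> pw q w"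
          by (auto intro!: pw_nonneg W_set)
      qed
      also have "\<dots> \<le> 2 * (D+1) * exp (- (N * t^2))"
        using bad_words[OF _ t(1-3)] N1 by simp
      finally show ?thesis .
    qed
    have den: "(\<Sum>T\<in>trees N D. pw q (enc T)) \<ge> exp (- (t^2/2) * N - 2 * L) / (2 * N * (N + 3))"
    proof -
      have "(\<Sum>T\<in>trees N D. pw q (enc T)) = (\<Sum>w\<in>enc ` trees N D. pw q w)"
        by (rule sum.reindex[symmetric, unfolded o_def]) (rule inj_on_subset[OF enc_inj], simp)
      also have "\<dots> \<ge> (\<Sum>w\<in>{w\<in>W D N. F 1 w}. pw q w)"
      proof (rule sum_mono2)
        show "finite (enc ` trees N D)" using finite_trees by simp
        show "{w\<in>W D N. F 1 w} \<subseteq> enc ` trees N D" by (rule F1_sub)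
        show "\<And>w. w \<in> enc ` trees N D - {w\<in>W D N. F 1 w} \<Longrightarrow> 0 \<le> pw q w"
          using enc_trees by (auto intro!: pw_nonneg W_set)
      qed
      finally show ?thesis using N0[of N] N by simp
    qed
    have dpos: "exp (- (t^2/2) * N - 2 * L) / (2 * N * (N + 3)) > 0" using N1 by simp
    have numnn: "0 \<le> 2 * (D+1) * exp (- (N * t^2))" by simp
    have "gibbs_prob \<beta> c D N ?A \<le> 2 * (D+1) * exp (- (N * t^2)) / (exp (- (t^2/2) * N - 2 * L) / (2 * N * (N + 3)))"
      unfolding gp by (rule frac_le[OF numnn num dpos den])
    also have "\<dots> = 4 * (D+1) * (real N * (real N + 3)) * (exp (- (N * t^2)) / exp (- (t^2/2) * N - 2 * L))"
      using N1 by (simp add: field_simps)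
    also have "exp (- (N * t^2)) / exp (- (t^2/2) * N - 2 * L) = exp (2 * L) * exp (- (t^2/2) * N)"
      by (simp add: exp_diff[symmetric] exp_add[symmetric] algebra_simps)
    finally show ?thesis by (simp add: algebra_simps)
  qed
  have lim: "(\<lambda>N. 4 * (D+1) * exp (2 * L) * (real N * (real N + 3) * exp (- (t^2/2) * N))) \<longlonglongrightarrow> 0"
    by (rule lim_aux) (use t in simp)
  have nn: "gibbs_prob \<beta> c D N A \<ge> 0" for N A
    unfolding gibbs_prob_def by (intro divide_nonneg_nonneg sum_nonneg) auto
  show ?thesis
  proof (rule real_tendsto_sandwich[OF _ _ tendsto_const lim])
    show "eventually (\<lambda>N. 0 \<le> gibbs_prob \<beta> c D N {T. \<exists>k\<le>D. \<bar>real (chi k T) / real N - p k\<bar> > \<epsilon>}) sequentially"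
      using nn by simp
    show "eventually (\<lambda>N. gibbs_prob \<beta> c D N {T. \<exists>k\<le>D. \<bar>real (chi k T) / real N - p k\<bar> > \<epsilon>}
       \<le> 4 * (D+1) * exp (2 * L) * (real N * (real N + 3) * exp (- (t^2/2) * N))) sequentially"
      using bound by (intro eventually_sequentiallyI[of "max N0 1"]) blast
  qed
qed

lemma main_D1:
  fixes \<beta> :: real and c p :: "nat \<Rightarrow> real" and \<epsilon> :: real
  assumes p: "p \<in> Mset 1" and \<epsilon>: "\<epsilon> > 0"
  shows "(\<lambda>N. gibbs_prob \<beta> c 1 N {T. \<exists>k\<le>1. \<bar>real (chi k T) / real N - p k\<bar> > \<epsilon>}) \<longlonglongrightarrow> 0"
proof (rule tendsto_eventually)
  have ps: "p 0 + p 1 = 1" and pm: "p 1 = 1" using p unfolding Mset_def by (auto simp: atMost_Suc)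
  then have p0: "p 0 = 0" by simp
  obtain M :: nat where M: "M > 1 / \<epsilon>" using reals_Archimedean2 by blast
  show "eventually (\<lambda>N. gibbs_prob \<beta> c 1 N {T. \<exists>k\<le>1. \<bar>real (chi k T) / real N - p k\<bar> > \<epsilon>} = 0) sequentially"
  proof (rule eventually_sequentiallyI[of "max M 1"])
    fix N assume N: "N \<ge> max M 1"
    have Np: "real N > 0" using N by simp
    have "real N \<ge> real M" using N by simp
    then have "real N > 1 / \<epsilon>" using M by linarith
    then have Ne: "1 / real N < \<epsilon>" using \<epsilon> Np by (simp add: field_simps)
    have empty: "trees N 1 \<inter> {T. \<exists>k\<le>1. \<bar>real (chi k T) / real N - p k\<bar> > \<epsilon>} = {}"
    proof (rule ccontr)
      assume "\<not> ?thesis"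
      then obtain T k where T: "T \<in> trees N 1" "k \<le> 1" "\<bar>real (chi k T) / real N - p k\<bar> > \<epsilon>" by blast
      have sD: "set (enc T) \<subseteq> {..1}" using T by (simp add: trees_def deg_enc)
      have le: "length (enc T) = N" and se: "sum_list (enc T) + 1 = N"
        using T length_enc[of T] sum_enc[of T] by (auto simp: trees_def)
      have c1: "real (cnt 0 (enc T)) + real (cnt 1 (enc T)) = N"
        using cnt_sum[OF sD, of "\<lambda>_. 1"] le by (simp add: atMost_Suc sum_list_triv)
      have c2: "real (cnt 1 (enc T)) = real N - 1"
      proof -
        have "(\<Sum>k\<le>1. real k * real (cnt k (enc T))) = sum_list (map real (enc T))"
          by (rule cnt_sum[OF sD])
        also have "\<dots> = real (sum_list (enc T))" by (simp add: sum_list_of_nat)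
        finally show ?thesis using se by (simp add: atMost_Suc)
      qed
      have "\<bar>real (chi k T) / real N - p k\<bar> = 1 / real N"
      proof (cases "k = 0")
        case True
        then have "real (chi k T) = 1" using c1 c2 by (simp add: chi_enc)
        then show ?thesis using True p0 Np by simp
      next
        case False
        then have k1: "k = 1" using T by simp
        have ch: "real (chi k T) = real N - 1" using c2 k1 by (simp add: chi_enc)
        have "real (chi k T) / real N - p k = (real N - 1) / real N - 1" using ch k1 pm by simp
        also have "\<dots> = - (1 / real N)" using Np by (simp add: field_simps)
        finally have "real (chi k T) / real N - p k = - (1 / real N)" .
        then show ?thesis using Np by simp
      qed
      then show False using T Ne by simp
    qed
    show "gibbs_prob \<beta> c 1 N {T. \<exists>k\<le>1. \<bar>real (chi k T) / real N - p k\<bar> > \<epsilon>} = 0"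
      unfolding gibbs_prob_def empty by simp
  qed
qed

theorem corollary2:
  fixes D :: nat and \<beta> :: real and c :: "nat \<Rightarrow> real" and p :: "nat \<Rightarrow> real"
  assumes "D \<ge> 1" and "\<beta> > 0"
    and "p \<in> Mset D" and "\<forall>q\<in>Mset D. Jfun \<beta> c D p \<le> Jfun \<beta> c D q"
  shows "\<forall>\<epsilon>>0. (\<lambda>N. gibbs_prob \<beta> c D N
            {T. \<exists>k\<le>D. \<bar>real (chi k T) / real N - p k\<bar> > \<epsilon>}) \<longlonglongrightarrow> 0"
proof (intro allI impI)
  fix \<epsilon> :: real assume \<epsilon>: "\<epsilon> > 0"
  show "(\<lambda>N. gibbs_prob \<beta> c D N {T. \<exists>k\<le>D. \<bar>real (chi k T) / real N - p k\<bar> > \<epsilon>}) \<longlonglongrightarrow> 0"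
  proof (cases "D = 1")
    case True
    then show ?thesis using main_D1[of p \<epsilon> \<beta> c] assms \<epsilon> by simp
  next
    case False
    then have "D \<ge> 2" using assms by simp
    then show ?thesis using main_D2[of D \<beta> p c \<epsilon>] assms \<epsilon> by blast
  qed
qed

end
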